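(* Let $f:\mathbb{N}\to\mathbb{N}$ be a unary extended polynomial. Then there exists $m\in\mathbb{N}$ such that for all $n_1,n_2\geq m$, if $n_1\geq n_2$ then $f(n_1)\geq f(n_2)$.
   Context: The class of extended polynomials is the smallest class of functions $\mathbb{N}^k\to\mathbb{N}$ (of all arities $k$) that contains the constant functions $0$ and $1$, all projections, addition, multiplication, and the function $\mathrm{ifzero}(n,m,p)=m$ if $n=0$ and $=p$ otherwise, and that is closed under composition. *)

theory Defs
  imports Main
begin

text \<open>A k-ary function N^k -> N is represented as a function on lists of naturals,
  of which only the values on lists of length k are relevant.\<close>

definition ifzero :: "nat \<Rightarrow> nat \<Rightarrow> nat \<Rightarrow> nat" where
  "ifzero n m p = (if n = 0 then m else p)"

inductive ext_poly :: "nat \<Rightarrow> (nat list \<Rightarrow> nat) \<Rightarrow> bool" where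
  zero: "ext_poly k (\<lambda>xs. 0)"
| one: "ext_poly k (\<lambda>xs. 1)"
| proj: "i < k \<Longrightarrow> ext_poly k (\<lambda>xs. xs ! i)"
| add: "ext_poly 2 (\<lambda>xs. xs ! 0 + xs ! 1)"
| mult: "ext_poly 2 (\<lambda>xs. xs ! 0 * xs ! 1)"
| ifz: "ext_poly 3 (\<lambda>xs. ifzero (xs ! 0) (xs ! 1) (xs ! 2))"
| comp: "\<lbrakk> ext_poly (length hs) g; \<forall>h \<in> set hs. ext_poly k h \<rbrakk>
         \<Longrightarrow> ext_poly k (\<lambda>xs. g (map (\<lambda>h. h xs) hs))"

definition unary_ext_poly :: "(nat \<Rightarrow> nat) \<Rightarrow> bool" where
  "unary_ext_poly f \<longleftrightarrow> (\<exists>F. ext_poly 1 F \<and> (\<forall>n. f n = F [n]))"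

end

theory Submission
  imports Defs
begin

definition EM :: "(nat \<Rightarrow> nat) \<Rightarrow> bool" where
  "EM f \<longleftrightarrow> (\<exists>m. \<forall>a b. m \<le> a \<longrightarrow> a \<le> b \<longrightarrow> f a \<le> f b)"

lemma EM_const: "EM (\<lambda>n. c)" unfolding EM_def by auto

lemma EM_add: assumes "EM f" "EM g" shows "EM (\<lambda>n. f n + g n)"
proof -
  obtain m1 where m1: "\<forall>a b. m1 \<le> a \<longrightarrow> a \<le> b \<longrightarrow> f a \<le> f b" using assms(1) EM_def by blast
  obtain m2 where m2: "\<forall>a b. m2 \<le> a \<longrightarrow> a \<le> b \<longrightarrow> g a \<le> g b" using assms(2) EM_def by blast
  show ?thesis unfolding EM_def
    by (rule exI[of _ "max m1 m2"]) (auto intro!: add_mono m1[rule_format] m2[rule_format])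
qed

lemma EM_mult: assumes "EM f" "EM g" shows "EM (\<lambda>n. f n * g n)"
proof -
  obtain m1 where m1: "\<forall>a b. m1 \<le> a \<longrightarrow> a \<le> b \<longrightarrow> f a \<le> f b" using assms(1) EM_def by blast
  obtain m2 where m2: "\<forall>a b. m2 \<le> a \<longrightarrow> a \<le> b \<longrightarrow> g a \<le> g b" using assms(2) EM_def by blast
  show ?thesis unfolding EM_def
    by (rule exI[of _ "max m1 m2"]) (auto intro!: mult_le_mono m1[rule_format] m2[rule_format])
qed

lemma EM_ifz: assumes "EM f" "EM g" "EM h" shows "EM (\<lambda>n. ifzero (f n) (g n) (h n))"
proof -
  obtain m1 where m1: "\<forall>a b. m1 \<le> a \<longrightarrow> a \<le> b \<longrightarrow> f a \<le> f b" using assms(1) EM_def by blast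
  obtain m2 where m2: "\<forall>a b. m2 \<le> a \<longrightarrow> a \<le> b \<longrightarrow> g a \<le> g b" using assms(2) EM_def by blast
  obtain m3 where m3: "\<forall>a b. m3 \<le> a \<longrightarrow> a \<le> b \<longrightarrow> h a \<le> h b" using assms(3) EM_def by blast
  show ?thesis
  proof (cases "\<exists>n0\<ge>m1. f n0 > 0")
    case True
    then obtain n0 where n0: "n0 \<ge> m1" "f n0 > 0" by blast
    have pos: "f n > 0" if "n \<ge> n0" for n
      using m1 n0 that by (metis gr0I le_zero_eq)
    show ?thesis unfolding EM_def
      apply (rule exI[of _ "max n0 m3"])
      using pos m3 by (auto simp: ifzero_def) (metis le_trans max.cobounded1 not_less0)+
  next
    case False
    hence z: "f n = 0" if "n \<ge> m1" for n using that by auto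
    show ?thesis unfolding EM_def
      apply (rule exI[of _ "max m1 m2"])
      using z m2 by (auto simp: ifzero_def)
  qed
qed

lemma main: "ext_poly k F \<Longrightarrow> \<forall>us. length us = k \<longrightarrow> (\<forall>u\<in>set us. EM u)
   \<longrightarrow> EM (\<lambda>n. F (map (\<lambda>u. u n) us))"
proof (induction rule: ext_poly.induct)
  case (zero k) then show ?case by (simp add: EM_const)
next
  case (one k) then show ?case by (simp add: EM_const)
next
  case (proj i k) then show ?case by (auto simp: nth_map)
next
  case add
  show ?case
  proof (intro allI impI)
    fix us :: "(nat \<Rightarrow> nat) list" assume "length us = 2" "\<forall>u\<in>set us. EM u"
    moreover have "us ! 0 \<in> set us" "us ! 1 \<in> set us" using \<open>length us = 2\<close> by auto
    ultimately show "EM (\<lambda>n. map (\<lambda>u. u n) us ! 0 + map (\<lambda>u. u n) us ! 1)"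
      by (simp add: EM_add)
  qed
next
  case mult
  show ?case
  proof (intro allI impI)
    fix us :: "(nat \<Rightarrow> nat) list" assume "length us = 2" "\<forall>u\<in>set us. EM u"
    moreover have "us ! 0 \<in> set us" "us ! 1 \<in> set us" using \<open>length us = 2\<close> by auto
    ultimately show "EM (\<lambda>n. map (\<lambda>u. u n) us ! 0 * map (\<lambda>u. u n) us ! 1)"
      by (simp add: EM_mult)
  qed
next
  case ifz
  show ?case
  proof (intro allI impI)
    fix us :: "(nat \<Rightarrow> nat) list" assume "length us = 3" "\<forall>u\<in>set us. EM u"
    moreover have "us ! 0 \<in> set us" "us ! 1 \<in> set us" "us ! 2 \<in> set us" using \<open>length us = 3\<close> by auto
    ultimately show "EM (\<lambda>n. ifzero (map (\<lambda>u. u n) us ! 0) (map (\<lambda>u. u n) us ! 1) (map (\<lambda>u. u n) us ! 2))"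
      by (simp add: EM_ifz)
  qed
next
  case (comp hs g k)
  show ?case
  proof (intro allI impI)
    fix us :: "(nat \<Rightarrow> nat) list" assume us: "length us = k" "\<forall>u\<in>set us. EM u"
    define vs where "vs = map (\<lambda>h n. h (map (\<lambda>u. u n) us)) hs"
    have "\<forall>v\<in>set vs. EM v" using comp.IH(2) us unfolding vs_def by auto
    moreover have "length vs = length hs" unfolding vs_def by simp
    ultimately have "EM (\<lambda>n. g (map (\<lambda>v. v n) vs))" using comp.IH(1) by blast
    moreover have "map (\<lambda>v. v n) vs = map (\<lambda>h. h (map (\<lambda>u. u n) us)) hs" for n
      unfolding vs_def by simp
    ultimately show "EM (\<lambda>n. g (map (\<lambda>h. h (map (\<lambda>u. u n) us)) hs))" by simp
  qed
qed

theorem proposition1: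
  fixes f :: "nat \<Rightarrow> nat"
  assumes "unary_ext_poly f"
  shows "\<exists>m. \<forall>n1 n2. n1 \<ge> m \<longrightarrow> n2 \<ge> m \<longrightarrow> n1 \<ge> n2 \<longrightarrow> f n1 \<ge> f n2"
proof -
  obtain F where F: "ext_poly 1 F" "\<forall>n. f n = F [n]" using assms unary_ext_poly_def by blast
  have "EM (\<lambda>n. F (map (\<lambda>u. u n) [\<lambda>n. n]))"
    using main[OF F(1), rule_format, of "[\<lambda>n. n]"] by (simp add: EM_def)
  moreover have "f = (\<lambda>n. F [n])" using F(2) by auto
  ultimately have "EM f" by simp
  then show ?thesis unfolding EM_def by blast
qed

end
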